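(* Let $j_0\geq 0$ be a real number and $n\in\mathbb{N}$. Consider the directed graph with initial node $(0,j_0)$ in which, from each node $(m,j_m)$ with $0\leq m<n$, there are exactly two edges: one "up" edge to $(m+1,j_m+1)$ and one "down" edge to $(m+1,\max(j_m-1,0))$. For real $j$ and integer $k$, let $\Lambda^{j_0}_{j,k,n}$ denote the number of paths from $(0,j_0)$ to the node $(n,j)$ that have exactly $k$ up jumps. Then \[ \Lambda^{j_0}_{j,k,n} = \begin{cases} \binom{n}{k}, &\text{if } j=j_0+2k-n \text{ and } n-\lfloor j_0\rfloor\leq k\leq n,\\[1mm] \binom{n}{k}-\binom{n}{k+\lfloor j_0\rfloor+1}, &\text{if } j=j_0+2k-n \text{ and } n-\lfloor\frac{n+j_0}{2}\rfloor\leq k\leq n-\lfloor j_0\rfloor-1,\\[1mm] \binom{n}{k-j}-\binom{n}{k-j-1}, &\text{if } 0\leq j\leq n-\lfloor j_0\rfloor-1 \text{ (with } j \text{ an integer) and } j\leq k\leq \lfloor\frac{n-\lfloor j_0\rfloor-1+j}{2}\rfloor, \end{cases} \] and all other values of $\Lambda^{j_0}_{j,k,n}$ are zero.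
   Context: $\lfloor x\rfloor$ denotes the integer part of $x$. Binomial coefficients $\binom{n}{i}$ are taken to be $0$ when $i<0$ or $i>n$. *)

theory Defs
  imports Complex_Main
begin

definition walk_step :: "real \<Rightarrow> bool \<Rightarrow> real" where
  "walk_step j b = (if b then j + 1 else max (j - 1) 0)"

definition walk_end :: "real \<Rightarrow> bool list \<Rightarrow> real" where
  "walk_end j0 bs = foldl walk_step j0 bs"

text \<open>Paths from (0,j0) to (n,j) are exactly the jump sequences of length n whose
  endpoint is j; Lambda counts those with exactly k up jumps.\<close>
definition Lambda :: "real \<Rightarrow> real \<Rightarrow> int \<Rightarrow> nat \<Rightarrow> nat" where
  "Lambda j0 j k n = card {bs :: bool list. length bs = n \<and>
      int (length (filter id bs)) = k \<and> walk_end j0 bs = j}"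

definition zbinom :: "nat \<Rightarrow> int \<Rightarrow> int" where
  "zbinom n i = (if i < 0 then 0 else int (n choose nat i))"

end

theory Submission
  imports Defs
begin


lemma zbinom_Suc: "zbinom (Suc n) k = zbinom n (k - 1) + zbinom n k"
proof -
  show ?thesis
  proof (cases "k < 0")
    case True then show ?thesis by (simp add: zbinom_def)
  next
    case False
    show ?thesis
    proof (cases "k = 0")
      case True then show ?thesis by (simp add: zbinom_def)
    next
      case False
      define m where "m = nat (k - 1)"
      have e1: "nat k = Suc m" "nat (k - 1) = m" using False \<open>\<not> k < 0\<close> by (simp_all add: m_def)
      show ?thesis using False \<open>\<not> k < 0\<close> unfolding zbinom_def e1 by simp
    qed
  qed
qed

lemma zbinom_big: "k > int n \<Longrightarrow> zbinom n k = 0"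
  unfolding zbinom_def by simp

lemma zbinom_neg: "k < 0 \<Longrightarrow> zbinom n k = 0"
  unfolding zbinom_def by simp

lemma zbinom_sym: "zbinom n (int n - m) = zbinom n m"
proof (cases "m < 0 \<or> m > int n")
  case True then show ?thesis by (auto simp: zbinom_def)
next
  case False
  define i where "i = nat m"
  have i: "m = int i" "i \<le> n" using False by (auto simp: i_def)
  then show ?thesis unfolding zbinom_def
    by (simp add: binomial_symmetric[of i n] nat_diff_distrib of_nat_diff)
qed

definition S :: "real \<Rightarrow> real \<Rightarrow> int \<Rightarrow> nat \<Rightarrow> bool list set" where
  "S j0 j k n = {bs :: bool list. length bs = n \<and>
      int (length (filter id bs)) = k \<and> walk_end j0 bs = j}"

lemma S_fin: "finite (S j0 j k n)"
proof -
  have "S j0 j k n \<subseteq> {bs. length bs = n}" unfolding S_def by auto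
  moreover have "finite {bs :: bool list. length bs = n}" using finite_lists_length_eq[of "UNIV::bool set" n] by simp
  ultimately show ?thesis by (rule finite_subset)
qed

lemma S_Suc: "S j0 j k (Suc n) = Cons True ` S (j0 + 1) j (k - 1) n \<union> Cons False ` S (max (j0 - 1) 0) j k n"
proof (rule set_eqI)
  fix bs
  show "bs \<in> S j0 j k (Suc n) \<longleftrightarrow> bs \<in> Cons True ` S (j0 + 1) j (k - 1) n \<union> Cons False ` S (max (j0 - 1) 0) j k n"
  proof (cases bs)
    case Nil then show ?thesis by (auto simp: S_def)
  next
    case (Cons b cs)
    have we: "walk_end j0 (b # cs) = walk_end (walk_step j0 b) cs" by (simp add: walk_end_def)
    show ?thesis
    proof (cases b)
      case True
      have "bs \<in> S j0 j k (Suc n) \<longleftrightarrow> cs \<in> S (j0 + 1) j (k - 1) n"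
        using Cons True we by (auto simp: S_def walk_step_def)
      then show ?thesis using Cons True by auto
    next
      case False
      have "bs \<in> S j0 j k (Suc n) \<longleftrightarrow> cs \<in> S (max (j0 - 1) 0) j k n"
        using Cons False we by (auto simp: S_def walk_step_def)
      then show ?thesis using Cons False by auto
    qed
  qed
qed

lemma card_S_Suc: "card (S j0 j k (Suc n)) = card (S (j0 + 1) j (k - 1) n) + card (S (max (j0 - 1) 0) j k n)"
proof -
  have d: "Cons True ` S (j0 + 1) j (k - 1) n \<inter> Cons False ` S (max (j0 - 1) 0) j k n = {}" by auto
  show ?thesis unfolding S_Suc
    by (subst card_Un_disjoint[OF _ _ d]) (auto simp: S_fin card_image)
qed

lemma S_0: "S j0 j k 0 = (if j = j0 \<and> k = 0 then {[]} else {})"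
  by (auto simp: S_def walk_end_def)

definition G :: "real \<Rightarrow> real \<Rightarrow> int \<Rightarrow> nat \<Rightarrow> int" where
  "G j0 j k n = (if j = j0 + 2 * of_int k - real n \<and> 0 \<le> j then zbinom n k - zbinom n (k + \<lfloor>j0\<rfloor> + 1)
     else if j \<in> \<int> \<and> 0 \<le> j \<and> 2 * k \<le> int n - \<lfloor>j0\<rfloor> - 1 + \<lfloor>j\<rfloor>
       then zbinom n (k - \<lfloor>j\<rfloor>) - zbinom n (k - \<lfloor>j\<rfloor> - 1) else 0)"

lemma G_rec_ge1:
  assumes "1 \<le> j0"
  shows "G j0 j k (Suc n) = G (j0 + 1) j (k - 1) n + G (max (j0 - 1) 0) j k n"
proof -
  have m: "max (j0 - 1) 0 = j0 - 1" using assms by simp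
  have f1: "\<lfloor>j0 + 1\<rfloor> = \<lfloor>j0\<rfloor> + 1" by simp
  have f2: "\<lfloor>j0 - 1\<rfloor> = \<lfloor>j0\<rfloor> - 1" by simp
  have P1: "(j = j0 + 1 + 2 * of_int (k - 1) - real n) = (j = j0 + 2 * of_int k - real (Suc n))" by auto
  have P2: "(j = j0 - 1 + 2 * of_int k - real n) = (j = j0 + 2 * of_int k - real (Suc n))" by auto
  have Q1: "(2 * (k - 1) \<le> int n - (\<lfloor>j0\<rfloor> + 1) - 1 + \<lfloor>j\<rfloor>) = (2 * k \<le> int (Suc n) - \<lfloor>j0\<rfloor> - 1 + \<lfloor>j\<rfloor>)" by auto
  have Q2: "(2 * k \<le> int n - (\<lfloor>j0\<rfloor> - 1) - 1 + \<lfloor>j\<rfloor>) = (2 * k \<le> int (Suc n) - \<lfloor>j0\<rfloor> - 1 + \<lfloor>j\<rfloor>)" by auto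
  have z1: "zbinom (Suc n) (k + \<lfloor>j0\<rfloor> + 1) = zbinom n (k - 1 + (\<lfloor>j0\<rfloor> + 1) + 1) + zbinom n (k + (\<lfloor>j0\<rfloor> - 1) + 1)"
    by (simp add: zbinom_Suc algebra_simps)
  have z2: "zbinom (Suc n) (k - \<lfloor>j\<rfloor>) = zbinom n (k - 1 - \<lfloor>j\<rfloor>) + zbinom n (k - \<lfloor>j\<rfloor>)"
    by (simp add: zbinom_Suc algebra_simps)
  have z3: "zbinom (Suc n) (k - \<lfloor>j\<rfloor> - 1) = zbinom n (k - 1 - \<lfloor>j\<rfloor> - 1) + zbinom n (k - \<lfloor>j\<rfloor> - 1)"
    by (simp add: zbinom_Suc algebra_simps)
  show ?thesis unfolding G_def m f1 f2 P1 P2 Q1 Q2 z1 z2 z3 zbinom_Suc[of n k]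
    by simp
qed

lemma not_int_between: "0 < x \<Longrightarrow> x < 1 \<Longrightarrow> (x::real) \<noteq> of_int z"
proof
  assume "0 < x" "x < 1" "x = of_int z"
  then have "0 < z" "z < 1" by simp_all
  then show False by simp
qed

lemma sym_identity:
  assumes "jj = 2 * k - int n"
  shows "zbinom (Suc n) (k - jj) - zbinom (Suc n) (k - jj - 1) =
    (zbinom n (k - 1 - jj) - zbinom n (k - 1 - jj - 1)) + (zbinom n k - zbinom n (k + 1))"
proof -
  have e1: "zbinom n k = zbinom n (k - jj)" using zbinom_sym[of n k] assms by simp
  have ix: "int n - (k + 1) = k - jj - 1" using assms by simp
  have e2: "zbinom n (k + 1) = zbinom n (k - jj - 1)" using zbinom_sym[of n "k+1"] unfolding ix by simp
  have z2: "zbinom (Suc n) (k - jj) = zbinom n (k - 1 - jj) + zbinom n (k - jj)"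
    by (simp add: zbinom_Suc algebra_simps)
  have z3: "zbinom (Suc n) (k - jj - 1) = zbinom n (k - 1 - jj - 1) + zbinom n (k - jj - 1)"
    by (simp add: zbinom_Suc algebra_simps)
  show ?thesis unfolding z2 z3 e1 e2 by simp
qed

lemma G_intj: "j = of_int jj \<Longrightarrow> \<not> (j = j0 + 2 * of_int k - real n \<and> 0 \<le> j) \<Longrightarrow>
  G j0 j k n = (if 0 \<le> jj \<and> 2 * k \<le> int n - \<lfloor>j0\<rfloor> - 1 + jj then zbinom n (k - jj) - zbinom n (k - jj - 1) else 0)"
  unfolding G_def by simp

lemma G_rec_lt1:
  assumes "0 \<le> j0" "j0 < 1"
  shows "G j0 j k (Suc n) = G (j0 + 1) j (k - 1) n + G (max (j0 - 1) 0) j k n"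
proof -
  have m: "max (j0 - 1) 0 = 0" using assms by simp
  have f0: "\<lfloor>j0\<rfloor> = 0" using assms by (simp add: floor_eq_iff)
  have f1: "\<lfloor>j0 + 1\<rfloor> = 1" using f0 by simp
  have P1: "(j = j0 + 1 + 2 * of_int (k - 1) - real n) = (j = j0 + 2 * of_int k - real (Suc n))" by auto
  have Q1: "(2 * (k - 1) \<le> int n - 1 - 1 + \<lfloor>j\<rfloor>) = (2 * k \<le> int (Suc n) - 0 - 1 + \<lfloor>j\<rfloor>)" by auto
  have z2: "zbinom (Suc n) (k - \<lfloor>j\<rfloor>) = zbinom n (k - 1 - \<lfloor>j\<rfloor>) + zbinom n (k - \<lfloor>j\<rfloor>)"
    by (simp add: zbinom_Suc algebra_simps)
  have z3: "zbinom (Suc n) (k - \<lfloor>j\<rfloor> - 1) = zbinom n (k - 1 - \<lfloor>j\<rfloor> - 1) + zbinom n (k - \<lfloor>j\<rfloor> - 1)"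
    by (simp add: zbinom_Suc algebra_simps)
  have z1: "zbinom (Suc n) (k + 1) = zbinom n k + zbinom n (k + 1)"
    by (simp add: zbinom_Suc algebra_simps)
  have z1': "zbinom n (k - 1 + 1 + 1) = zbinom n (k + 1)" by (simp add: algebra_simps)
  show ?thesis
  proof (cases "j \<in> \<int>")
    case False
    have nP2: "\<not> (j = 0 + 2 * of_int k - real n)"
    proof
      assume "j = 0 + 2 * of_int k - real n"
      then have "j = of_int (2 * k - int n)" by simp
      then show False using False by (metis Ints_of_int)
    qed
    show ?thesis unfolding G_def m f0 f1 P1 using False nP2
      by (simp add: zbinom_Suc[of n k] z1 z1')
  next
    case True
    then obtain jj where jj: "j = of_int jj" by (auto elim: Ints_cases)
    have fj: "\<lfloor>j\<rfloor> = jj" using jj by simp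
    have jZ: "j \<in> \<int>" using jj by simp
    have P2: "(j = 0 + 2 * of_int k - real n) = (jj = 2 * k - int n)" using jj by auto
    show ?thesis
    proof (cases "j0 = 0")
      case True
      have P0: "(j = j0 + 2 * of_int k - real (Suc n)) = (jj = 2 * k - int n - 1)" using jj True by auto
      have "(jj = 2 * k - int n - 1 \<and> 0 \<le> jj) \<or> (jj = 2 * k - int n \<and> 0 \<le> jj) \<or>
        \<not> (jj = 2 * k - int n - 1 \<and> 0 \<le> jj) \<and> \<not> (jj = 2 * k - int n \<and> 0 \<le> jj)" by blast
      then show ?thesis
      proof (elim disjE)
        assume h: "jj = 2 * k - int n - 1 \<and> 0 \<le> jj"
        show ?thesis unfolding G_def m f0 f1 P1 P0 P2 fj using h
          by (simp add: zbinom_Suc[of n k] z1 z1')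
      next
        assume h: "jj = 2 * k - int n \<and> 0 \<le> jj"
        show ?thesis unfolding G_def m f0 f1 P1 P0 P2 fj using h jZ sym_identity[of jj k n]
          by simp
      next
        assume h: "\<not> (jj = 2 * k - int n - 1 \<and> 0 \<le> jj) \<and> \<not> (jj = 2 * k - int n \<and> 0 \<le> jj)"
        have A: "\<not> (j = j0 + 2 * of_int k - real (Suc n) \<and> 0 \<le> j)" using h P0 jj by simp
        have B: "\<not> (j = (j0 + 1) + 2 * of_int (k - 1) - real n \<and> 0 \<le> j)" using h P0 P1 jj by simp
        have C: "\<not> (j = 0 + 2 * of_int k - real n \<and> 0 \<le> j)" using h P2 m jj by simp
        show ?thesis unfolding m G_intj[OF jj A] G_intj[OF jj B] G_intj[OF jj C] f0 f1
          using h by (auto simp: zbinom_Suc algebra_simps)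
      qed
    next
      case False
      then have j0p: "0 < j0" using assms by simp
      have nP0: "\<not> (j = j0 + 2 * of_int k - real (Suc n))"
      proof
        assume "j = j0 + 2 * of_int k - real (Suc n)"
        then have "j0 = of_int (jj - 2 * k + int (Suc n))" using jj by simp
        then show False using not_int_between[OF j0p assms(2)] by blast
      qed
      show ?thesis
      proof (cases "jj = 2 * k - int n \<and> 0 \<le> jj")
        case h: True
        show ?thesis unfolding G_def m f0 f1 P1 P2 fj using h jZ nP0 sym_identity[of jj k n]
          by simp
      next
        case h: False
        have A: "\<not> (j = j0 + 2 * of_int k - real (Suc n) \<and> 0 \<le> j)" using nP0 by simp
        have B: "\<not> (j = (j0 + 1) + 2 * of_int (k - 1) - real n \<and> 0 \<le> j)" using nP0 P1 by simp
        have C: "\<not> (j = 0 + 2 * of_int k - real n \<and> 0 \<le> j)" using h P2 m jj by simp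
        show ?thesis unfolding m G_intj[OF jj A] G_intj[OF jj B] G_intj[OF jj C] f0 f1
          using h by (auto simp: zbinom_Suc algebra_simps)
      qed
    qed
  qed
qed

lemma G_rec:
  assumes "0 \<le> j0"
  shows "G j0 j k (Suc n) = G (j0 + 1) j (k - 1) n + G (max (j0 - 1) 0) j k n"
  using G_rec_ge1 G_rec_lt1 assms by (cases "1 \<le> j0") auto

lemma zbinom_0: "zbinom 0 i = (if i = 0 then 1 else 0)"
  unfolding zbinom_def by auto

lemma G_0:
  assumes "0 \<le> j0"
  shows "G j0 j k 0 = (if j = j0 \<and> k = 0 then 1 else 0)"
proof -
  have a1: "of_int \<lfloor>j0\<rfloor> \<le> j0" "j0 < of_int \<lfloor>j0\<rfloor> + 1" by linarith+
  have a0: "0 \<le> \<lfloor>j0\<rfloor>" using assms by simp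
  show ?thesis
  proof (cases "j = j0 + 2 * of_int k \<and> 0 \<le> j")
    case True
    have "k + \<lfloor>j0\<rfloor> + 1 \<noteq> 0"
    proof
      assume "k + \<lfloor>j0\<rfloor> + 1 = 0"
      then have "of_int k = - of_int \<lfloor>j0\<rfloor> - (1::real)" by linarith
      then show False using True a1 a0 by linarith
    qed
    then show ?thesis unfolding G_def using True by (auto simp: zbinom_0)
  next
    case False
    then have ne: "\<not> (j = j0 \<and> k = 0)" using assms by auto
    have "(if j \<in> \<int> \<and> 0 \<le> j \<and> 2 * k \<le> int 0 - \<lfloor>j0\<rfloor> - 1 + \<lfloor>j\<rfloor>
       then zbinom 0 (k - \<lfloor>j\<rfloor>) - zbinom 0 (k - \<lfloor>j\<rfloor> - 1) else 0) = 0"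
    proof (cases "j \<in> \<int> \<and> 0 \<le> j \<and> 2 * k \<le> int 0 - \<lfloor>j0\<rfloor> - 1 + \<lfloor>j\<rfloor>")
      case True
      have "0 \<le> \<lfloor>j\<rfloor>" using True by simp
      then have "k - \<lfloor>j\<rfloor> < 0" using True a0 by linarith
      then show ?thesis using True by (simp add: zbinom_neg)
    next
      case False then show ?thesis by (simp only: if_False)
    qed
    moreover have "G j0 j k 0 = (if j \<in> \<int> \<and> 0 \<le> j \<and> 2 * k \<le> int 0 - \<lfloor>j0\<rfloor> - 1 + \<lfloor>j\<rfloor>
       then zbinom 0 (k - \<lfloor>j\<rfloor>) - zbinom 0 (k - \<lfloor>j\<rfloor> - 1) else 0)"
      unfolding G_def by (subst if_not_P) (use False in auto)
    ultimately show ?thesis using ne by simp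
  qed
qed

lemma Lambda_G: "0 \<le> j0 \<Longrightarrow> int (card (S j0 j k n)) = G j0 j k n"
proof (induction n arbitrary: j0 k)
  case 0
  then show ?case by (simp add: S_0 G_0)
next
  case (Suc n)
  have "int (card (S j0 j k (Suc n))) = int (card (S (j0 + 1) j (k - 1) n)) + int (card (S (max (j0 - 1) 0) j k n))"
    by (simp add: card_S_Suc)
  also have "\<dots> = G (j0 + 1) j (k - 1) n + G (max (j0 - 1) 0) j k n"
    using Suc by simp
  also have "\<dots> = G j0 j k (Suc n)" using G_rec[OF Suc.prems] by simp
  finally show ?case .
qed

lemma F_G:
  fixes j0 j :: real and k :: int and n :: nat
  assumes "j0 \<ge> 0"
  shows "(if j = j0 + 2 * of_int k - real n \<and> int n - \<lfloor>j0\<rfloor> \<le> k \<and> k \<le> int n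
       then zbinom n k
     else if j = j0 + 2 * of_int k - real n \<and>
             int n - \<lfloor>(real n + j0) / 2\<rfloor> \<le> k \<and> k \<le> int n - \<lfloor>j0\<rfloor> - 1
       then zbinom n k - zbinom n (k + \<lfloor>j0\<rfloor> + 1)
     else if j \<in> \<int> \<and> 0 \<le> j \<and> j \<le> real n - of_int \<lfloor>j0\<rfloor> - 1 \<and>
             of_int k \<ge> j \<and> k \<le> \<lfloor>(real n - of_int \<lfloor>j0\<rfloor> - 1 + j) / 2\<rfloor>
       then zbinom n (k - \<lfloor>j\<rfloor>) - zbinom n (k - \<lfloor>j\<rfloor> - 1)
     else 0) = G j0 j k n"
proof -
  define a where "a = \<lfloor>j0\<rfloor>"
  have a1: "of_int a \<le> j0" "j0 < of_int a + 1" unfolding a_def by linarith+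
  have a0: "0 \<le> a" using assms unfolding a_def by simp
  have hf: "(int n - \<lfloor>(real n + j0) / 2\<rfloor> \<le> k) = (real n \<le> j0 + 2 * of_int k)"
  proof -
    have "(int n - \<lfloor>(real n + j0) / 2\<rfloor> \<le> k) = (int n - k \<le> \<lfloor>(real n + j0) / 2\<rfloor>)" by linarith
    also have "\<dots> = (of_int (int n - k) \<le> (real n + j0) / 2)" by (rule le_floor_iff)
    also have "\<dots> = (real n \<le> j0 + 2 * of_int k)" by (simp add: field_simps)
    finally show ?thesis .
  qed
  note defs = a_def[symmetric]
  show ?thesis
  proof (cases "j = j0 + 2 * of_int k - real n")
    case P: True
    have nf: "\<not> k \<le> \<lfloor>(real n - of_int a - 1 + j) / 2\<rfloor>"
    proof -
      have "(real n - of_int a - 1 + j) / 2 < of_int k" using P a1 by (simp add: field_simps)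
      then show ?thesis by linarith
    qed
    show ?thesis
    proof (cases "0 \<le> j")
      case True
      then have kk: "int n - \<lfloor>(real n + j0) / 2\<rfloor> \<le> k" using hf P by simp
      show ?thesis
      proof (cases "int n - a \<le> k \<and> k \<le> int n")
        case True
        then show ?thesis unfolding G_def defs using P \<open>0 \<le> j\<close> a0 by (simp add: zbinom_big)
      next
        case c1: False
        show ?thesis
        proof (cases "k \<le> int n - a - 1")
          case True
          then show ?thesis unfolding G_def defs using P \<open>0 \<le> j\<close> c1 kk by simp
        next
          case False
          then have "k > int n" using c1 by simp
          then show ?thesis unfolding G_def defs using P \<open>0 \<le> j\<close> c1 nf a0 by (simp add: zbinom_big)
        qed
      qed
    next
      case False
      then have nk: "\<not> (int n - \<lfloor>(real n + j0) / 2\<rfloor> \<le> k)" using hf P by simp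
      have "int n - a \<le> k \<Longrightarrow> k < 0"
      proof -
        assume "int n - a \<le> k"
        then have "real n - of_int a \<le> of_int k" by linarith
        then show "k < 0" using P False a1 by linarith
      qed
      then show ?thesis unfolding G_def defs using P False nk by (auto simp: zbinom_neg)
    qed
  next
    case nP: False
    show ?thesis
    proof (cases "j \<in> \<int> \<and> 0 \<le> j")
      case False
      then show ?thesis unfolding G_def using nP by auto
    next
      case True
      then obtain jj where jj: "j = of_int jj" and jj0: "0 \<le> jj" by (auto elim: Ints_cases)
      have fj: "\<lfloor>j\<rfloor> = jj" using jj by simp
      have e: "(k \<le> \<lfloor>(real n - of_int a - 1 + j) / 2\<rfloor>) = (2 * k \<le> int n - a - 1 + jj)"
      proof -
        have "(k \<le> \<lfloor>(real n - of_int a - 1 + j) / 2\<rfloor>) = (of_int k \<le> (real n - of_int a - 1 + j) / 2)"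
          by (rule le_floor_iff)
        also have "\<dots> = (2 * of_int k \<le> real n - of_int a - 1 + of_int jj)" using jj by (simp add: field_simps)
        also have "\<dots> = (of_int (2 * k) \<le> (of_int (int n - a - 1 + jj) :: real))" by simp
        also have "\<dots> = (2 * k \<le> int n - a - 1 + jj)" by (rule of_int_le_iff)
        finally show ?thesis .
      qed
      show ?thesis
      proof (cases "2 * k \<le> int n - a - 1 + jj")
        case c: True
        show ?thesis
        proof (cases "jj \<le> k")
          case True
          then show ?thesis unfolding G_def defs fj e using nP jj jj0 c by simp
        next
          case False
          then show ?thesis unfolding G_def defs fj e using nP jj jj0 c by (simp add: zbinom_neg)
        qed
      next
        case False
        then show ?thesis unfolding G_def defs fj e using nP jj jj0 by simp
      qed
    qed
  qed
qed


theorem lemma2p1: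
  fixes j0 j :: real and k :: int and n :: nat
  assumes "j0 \<ge> 0"
  shows "int (Lambda j0 j k n) =
    (if j = j0 + 2 * of_int k - real n \<and> int n - \<lfloor>j0\<rfloor> \<le> k \<and> k \<le> int n
       then zbinom n k
     else if j = j0 + 2 * of_int k - real n \<and>
             int n - \<lfloor>(real n + j0) / 2\<rfloor> \<le> k \<and> k \<le> int n - \<lfloor>j0\<rfloor> - 1
       then zbinom n k - zbinom n (k + \<lfloor>j0\<rfloor> + 1)
     else if j \<in> \<int> \<and> 0 \<le> j \<and> j \<le> real n - of_int \<lfloor>j0\<rfloor> - 1 \<and>
             of_int k \<ge> j \<and> k \<le> \<lfloor>(real n - of_int \<lfloor>j0\<rfloor> - 1 + j) / 2\<rfloor>
       then zbinom n (k - \<lfloor>j\<rfloor>) - zbinom n (k - \<lfloor>j\<rfloor> - 1)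
     else 0)"
  proof -
  have L: "Lambda j0 j k n = card (S j0 j k n)" unfolding Lambda_def S_def by (rule refl)
  show ?thesis unfolding L Lambda_G[OF assms] by (rule F_G[OF assms, symmetric])
qed

end
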